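(* Let $S\in\mathbb{S}^d_m$, $G\in\mathcal{M}(S)$ and $y\in\mathbb{R}^d$ with $P_G(y)\ne\emptyset$. Then $P_G(y)$ is a convex set if and only if $S(u-v,u-v)=0$ for all $u,v\in P_G(y)$. Consequently, $\Sigma_0(P_G)=\{y\in\Sigma(P_G): P_G(y)\text{ is convex}\}$.
   Context: $\mathbb{S}^d_m$: symmetric invertible $d\times d$ real matrices with exactly $m$ positive eigenvalues; $S(x,y):=\langle x,Sy\rangle$. $G\subset\mathbb{R}^d$ is $S$-monotone if $S(x-y,x-y)\ge0$ for $x,y\in G$; maximal if not a strict subset of another $S$-monotone set; $\mathcal{M}(S)$ is the family of maximal $S$-monotone sets. $P_G(y):=\operatorname{argmax}_{x\in G}(S(x,y)-\frac12S(x,x))$. $\Sigma(P_G):=\{y:P_G(y)\ne\emptyset\text{ and is not a single point}\}$; $\Sigma_0(P_G):=\{y\in\Sigma(P_G):S(y_1-y_2,y_1-y_2)=0\text{ for all }y_1,y_2\in P_G(y)\}$. *)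

theory Defs
  imports "Jordan_Normal_Form.Char_Poly"
begin

definition num_pos_eigenvalues :: "real mat \<Rightarrow> nat" where
  "num_pos_eigenvalues S =
     (\<Sum>e\<in>{e::real. e > 0 \<and> poly (char_poly S) e = 0}. order e (char_poly S))"

definition Sdm :: "nat \<Rightarrow> nat \<Rightarrow> real mat set" where
  "Sdm d m = {S. S \<in> carrier_mat d d \<and> transpose_mat S = S \<and> invertible_mat S
                \<and> num_pos_eigenvalues S = m}"

definition Sform :: "real mat \<Rightarrow> real vec \<Rightarrow> real vec \<Rightarrow> real" where
  "Sform S x y = scalar_prod x (S *\<^sub>v y)"

definition S_monotone :: "nat \<Rightarrow> real mat \<Rightarrow> real vec set \<Rightarrow> bool" where
  "S_monotone d S G \<longleftrightarrow> G \<subseteq> carrier_vec d \<and>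
     (\<forall>x\<in>G. \<forall>y\<in>G. Sform S (x - y) (x - y) \<ge> 0)"

definition max_S_monotone :: "nat \<Rightarrow> real mat \<Rightarrow> real vec set set" where
  "max_S_monotone d S = {G. S_monotone d S G \<and>
     (\<forall>H. S_monotone d S H \<and> G \<subseteq> H \<longrightarrow> H = G)}"

definition P_G :: "real mat \<Rightarrow> real vec set \<Rightarrow> real vec \<Rightarrow> real vec set" where
  "P_G S G y = {x \<in> G. \<forall>z\<in>G.
      Sform S z y - Sform S z z / 2 \<le> Sform S x y - Sform S x x / 2}"

definition Sigma_P :: "nat \<Rightarrow> real mat \<Rightarrow> real vec set \<Rightarrow> real vec set" where
  "Sigma_P d S G = {y \<in> carrier_vec d. P_G S G y \<noteq> {} \<and> \<not> (\<exists>x. P_G S G y = {x})}"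

definition Sigma0_P :: "nat \<Rightarrow> real mat \<Rightarrow> real vec set \<Rightarrow> real vec set" where
  "Sigma0_P d S G = {y \<in> Sigma_P d S G.
      \<forall>y1\<in>P_G S G y. \<forall>y2\<in>P_G S G y. Sform S (y1 - y2) (y1 - y2) = 0}"

definition convex_vec :: "real vec set \<Rightarrow> bool" where
  "convex_vec A \<longleftrightarrow> (\<forall>u\<in>A. \<forall>v\<in>A. \<forall>t::real. 0 \<le> t \<and> t \<le> 1 \<longrightarrow>
      t \<cdot>\<^sub>v u + (1 - t) \<cdot>\<^sub>v v \<in> A)"

end

theory Submission
  imports Defs
begin

lemma SF_addL: "S \<in> carrier_mat d d \<Longrightarrow> a \<in> carrier_vec d \<Longrightarrow> b \<in> carrier_vec d \<Longrightarrow> c \<in> carrier_vec d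
  \<Longrightarrow> Sform S (a + b) c = Sform S a c + Sform S b c"
  unfolding Sform_def by (rule add_scalar_prod_distrib[of _ d]) auto

lemma SF_minusL: "S \<in> carrier_mat d d \<Longrightarrow> a \<in> carrier_vec d \<Longrightarrow> b \<in> carrier_vec d \<Longrightarrow> c \<in> carrier_vec d
  \<Longrightarrow> Sform S (a - b) c = Sform S a c - Sform S b c"
  unfolding Sform_def by (rule minus_scalar_prod_distrib[of _ d]) auto

lemma SF_smultL: "S \<in> carrier_mat d d \<Longrightarrow> a \<in> carrier_vec d \<Longrightarrow> c \<in> carrier_vec d
  \<Longrightarrow> Sform S (k \<cdot>\<^sub>v a) c = k * Sform S a c"
  unfolding Sform_def by (rule smult_scalar_prod_distrib[of _ d]) auto

lemma SF_addR: "S \<in> carrier_mat d d \<Longrightarrow> a \<in> carrier_vec d \<Longrightarrow> b \<in> carrier_vec d \<Longrightarrow> c \<in> carrier_vec d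
  \<Longrightarrow> Sform S c (a + b) = Sform S c a + Sform S c b"
  unfolding Sform_def by (simp add: mult_add_distrib_mat_vec scalar_prod_add_distrib[of _ d])

lemma SF_minusR: "S \<in> carrier_mat d d \<Longrightarrow> a \<in> carrier_vec d \<Longrightarrow> b \<in> carrier_vec d \<Longrightarrow> c \<in> carrier_vec d
  \<Longrightarrow> Sform S c (a - b) = Sform S c a - Sform S c b"
  unfolding Sform_def by (simp add: mult_minus_distrib_mat_vec scalar_prod_minus_distrib[of _ d])

lemma SF_smultR: "S \<in> carrier_mat d d \<Longrightarrow> a \<in> carrier_vec d \<Longrightarrow> c \<in> carrier_vec d
  \<Longrightarrow> Sform S c (k \<cdot>\<^sub>v a) = k * Sform S c a"
  unfolding Sform_def by (simp add: mult_mat_vec[of _ d d] scalar_prod_smult_distrib[of _ d])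

lemma SF_sym: "S \<in> carrier_mat d d \<Longrightarrow> transpose_mat S = S \<Longrightarrow> a \<in> carrier_vec d \<Longrightarrow> c \<in> carrier_vec d
  \<Longrightarrow> Sform S a c = Sform S c a"
  unfolding Sform_def
  by (metis comm_scalar_prod mult_mat_vec_carrier transpose_vec_mult_scalar)

lemma quad_comb:
  assumes S: "S \<in> carrier_mat d d" "transpose_mat S = S"
    and c: "u \<in> carrier_vec d" "v \<in> carrier_vec d" "z \<in> carrier_vec d"
  shows "Sform S (t \<cdot>\<^sub>v u + (1 - t) \<cdot>\<^sub>v v - z) (t \<cdot>\<^sub>v u + (1 - t) \<cdot>\<^sub>v v - z)
     = t * Sform S (u - z) (u - z) + (1 - t) * Sform S (v - z) (v - z) - t * (1 - t) * Sform S (u - v) (u - v)"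
proof -
  have s1: "Sform S v u = Sform S u v" "Sform S z u = Sform S u z" "Sform S z v = Sform S v z"
    using SF_sym[OF S] c by auto
  show ?thesis using c S(1)
    by (simp add: SF_addL[of S d] SF_addR[of S d] SF_minusL[of S d] SF_minusR[of S d]
        SF_smultL[of S d] SF_smultR[of S d] s1 algebra_simps)
qed

lemma f_comb:
  assumes S: "S \<in> carrier_mat d d" "transpose_mat S = S"
    and c: "u \<in> carrier_vec d" "v \<in> carrier_vec d" "y \<in> carrier_vec d"
  shows "Sform S (t \<cdot>\<^sub>v u + (1 - t) \<cdot>\<^sub>v v) y - Sform S (t \<cdot>\<^sub>v u + (1 - t) \<cdot>\<^sub>v v) (t \<cdot>\<^sub>v u + (1 - t) \<cdot>\<^sub>v v) / 2
     = t * (Sform S u y - Sform S u u / 2) + (1 - t) * (Sform S v y - Sform S v v / 2)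
       + t * (1 - t) * Sform S (u - v) (u - v) / 2"
proof -
  have s1: "Sform S v u = Sform S u v"
    using SF_sym[OF S] c by auto
  show ?thesis using c S(1)
    apply (simp add: SF_addL[of S d] SF_addR[of S d] SF_minusL[of S d] SF_minusR[of S d]
        SF_smultL[of S d] SF_smultR[of S d] s1 algebra_simps)
    by (simp add: field_simps)
qed

lemma q_swap:
  assumes S: "S \<in> carrier_mat d d" "transpose_mat S = S"
    and c: "a \<in> carrier_vec d" "b \<in> carrier_vec d"
  shows "Sform S (a - b) (a - b) = Sform S (b - a) (b - a)"
proof -
  have s1: "Sform S b a = Sform S a b" using SF_sym[OF S] c by auto
  show ?thesis using c S(1)
    by (simp add: SF_minusL[of S d] SF_minusR[of S d] s1 algebra_simps)
qed

lemma q_zero: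
  assumes S: "S \<in> carrier_mat d d" and c: "a \<in> carrier_vec d"
  shows "Sform S (a - a) (a - a) = 0"
  unfolding Sform_def using c S by (simp add: scalar_prod_left_zero[of _ d])

lemma core:
  assumes S: "S \<in> carrier_mat d d" "transpose_mat S = S"
    and G: "G \<in> max_S_monotone d S"
    and y: "y \<in> carrier_vec d"
  shows "convex_vec (P_G S G y) \<longleftrightarrow>
           (\<forall>u\<in>P_G S G y. \<forall>v\<in>P_G S G y. Sform S (u - v) (u - v) = 0)"
proof -
  have Gc: "G \<subseteq> carrier_vec d" and mon: "\<And>x z. x \<in> G \<Longrightarrow> z \<in> G \<Longrightarrow> Sform S (x - z) (x - z) \<ge> 0"
    and mx: "\<And>H. S_monotone d S H \<Longrightarrow> G \<subseteq> H \<Longrightarrow> H = G"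
    using G unfolding max_S_monotone_def S_monotone_def by auto
  define f where "f x = Sform S x y - Sform S x x / 2" for x
  have P: "P_G S G y = {x \<in> G. \<forall>z\<in>G. f z \<le> f x}" unfolding P_G_def f_def by simp
  show ?thesis
  proof
    assume cv: "convex_vec (P_G S G y)"
    show "\<forall>u\<in>P_G S G y. \<forall>v\<in>P_G S G y. Sform S (u - v) (u - v) = 0"
    proof (intro ballI)
      fix u v assume u: "u \<in> P_G S G y" and v: "v \<in> P_G S G y"
      define w where "w = (1/2::real) \<cdot>\<^sub>v u + (1 - 1/2) \<cdot>\<^sub>v v"
      have "\<forall>t::real. 0 \<le> t \<and> t \<le> 1 \<longrightarrow> t \<cdot>\<^sub>v u + (1 - t) \<cdot>\<^sub>v v \<in> P_G S G y"
        using cv u v unfolding convex_vec_def by blast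
      from spec[OF this, of "1/2"] have w: "w \<in> P_G S G y" unfolding w_def by simp
      have uc: "u \<in> carrier_vec d" and vc: "v \<in> carrier_vec d" using u v P Gc by auto
      have fw: "f w = 1/2 * f u + (1 - 1/2) * f v + 1/2 * (1 - 1/2) * Sform S (u - v) (u - v) / 2"
        unfolding f_def w_def using f_comb[OF S uc vc y, of "1/2"] by simp
      have "f w \<le> f u" "f v \<le> f u" "f u \<le> f v" using u v w P by auto
      moreover have "Sform S (u - v) (u - v) \<ge> 0" using u v P mon by auto
      ultimately show "Sform S (u - v) (u - v) = 0" using fw by (simp add: field_simps)
    qed
  next
    assume iso: "\<forall>u\<in>P_G S G y. \<forall>v\<in>P_G S G y. Sform S (u - v) (u - v) = 0"
    show "convex_vec (P_G S G y)"
      unfolding convex_vec_def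
    proof (intro ballI allI impI)
      fix u v and t :: real
      assume u: "u \<in> P_G S G y" and v: "v \<in> P_G S G y" and t: "0 \<le> t \<and> t \<le> 1"
      define w where "w = t \<cdot>\<^sub>v u + (1 - t) \<cdot>\<^sub>v v"
      have uc: "u \<in> carrier_vec d" and vc: "v \<in> carrier_vec d" using u v P Gc by auto
      have wc: "w \<in> carrier_vec d" unfolding w_def using uc vc by auto
      have q0: "Sform S (u - v) (u - v) = 0" using iso u v by auto
      have uG: "u \<in> G" and vG: "v \<in> G" using u v P by auto
      have wz: "Sform S (w - z) (w - z) \<ge> 0" if z: "z \<in> G" for z
      proof -
        have zc: "z \<in> carrier_vec d" using z Gc by auto
        have "Sform S (w - z) (w - z) = t * Sform S (u - z) (u - z) + (1 - t) * Sform S (v - z) (v - z)"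
          unfolding w_def using quad_comb[OF S uc vc zc, of t] q0 by simp
        moreover have "Sform S (u - z) (u - z) \<ge> 0" "Sform S (v - z) (v - z) \<ge> 0"
          using mon uG vG z by auto
        ultimately show ?thesis using t by simp
      qed
      have "S_monotone d S (insert w G)"
        unfolding S_monotone_def
      proof (intro conjI ballI)
        show "insert w G \<subseteq> carrier_vec d" using Gc wc by auto
      next
        fix a b assume a: "a \<in> insert w G" and b: "b \<in> insert w G"
        show "Sform S (a - b) (a - b) \<ge> 0"
        proof (cases "a = w")
          case True
          then show ?thesis
          proof (cases "b = w")
            case True
            then show ?thesis using \<open>a = w\<close> q_zero[OF S(1) wc] by simp
          next
            case False
            then show ?thesis using \<open>a = w\<close> b wz by auto
          qed
        next
          case False
          hence aG: "a \<in> G" using a by auto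
          show ?thesis
          proof (cases "b = w")
            case True
            have "a \<in> carrier_vec d" using aG Gc by auto
            then show ?thesis using True aG wz[OF aG] q_swap[OF S wc, of a] by simp
          next
            case False
            then show ?thesis using aG b mon by auto
          qed
        qed
      qed
      hence "insert w G = G" using mx by auto
      hence wG: "w \<in> G" by auto
      have fw: "f w = t * f u + (1 - t) * f v"
        unfolding f_def w_def using f_comb[OF S uc vc y, of t] q0 by simp
      have "\<forall>z\<in>G. f z \<le> f w"
      proof
        fix z assume z: "z \<in> G"
        have "f z \<le> f u" "f z \<le> f v" using z u v P by auto
        hence "t * f z \<le> t * f u" "(1 - t) * f z \<le> (1 - t) * f v"
          using t by (auto intro: mult_left_mono)
        thus "f z \<le> f w" using fw by (simp add: algebra_simps)
      qed
      thus "t \<cdot>\<^sub>v u + (1 - t) \<cdot>\<^sub>v v \<in> P_G S G y" using wG P w_def by auto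
    qed
  qed
qed

theorem lemma3:
  fixes d m :: nat and S :: "real mat" and G :: "real vec set" and y :: "real vec"
  assumes "S \<in> Sdm d m"
    and "G \<in> max_S_monotone d S"
    and "y \<in> carrier_vec d"
    and "P_G S G y \<noteq> {}"
  shows "(convex_vec (P_G S G y) \<longleftrightarrow>
           (\<forall>u\<in>P_G S G y. \<forall>v\<in>P_G S G y. Sform S (u - v) (u - v) = 0))
         \<and> Sigma0_P d S G = {y' \<in> Sigma_P d S G. convex_vec (P_G S G y')}"
proof -
  have S: "S \<in> carrier_mat d d" "transpose_mat S = S" using assms(1) unfolding Sdm_def by auto
  have "Sigma0_P d S G = {y' \<in> Sigma_P d S G. convex_vec (P_G S G y')}"
    unfolding Sigma0_P_def using core[OF S assms(2)] unfolding Sigma_P_def by auto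
  thus ?thesis using core[OF S assms(2,3)] by simp
qed

end
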